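(* Fix $e\in -\mathrm{int}(C)$ and let $A,B\in\mathcal P^0_{\mp C}(Y)$ be $\mp C$-compact sets. Then $(0,0)<_{\mathbb R^2_+}w_e(A,B)$ if and only if $A\prec^s B$.
   Context: $Y$ is a real topological linear space and $C\subset Y$ is a convex, closed, pointed cone with nonempty interior. $a<_{\mathbb R^2_+}b$ iff $b-a\in\mathrm{int}(\mathbb R^2_+)$. $\mathcal P^0_{\mp C}(Y)$ is the family of nonempty $A\subset Y$ with $A+C\neq Y$ and $A-C\neq Y$. $A$ is $C$-compact if every cover of $A$ by sets $U_\alpha+C$ with $U_\alpha$ open has a finite subcover; $\mp C$-compact means $C$-compact and $-C$-compact. $A\prec^s B$ iff $B\subset A+\mathrm{int}(C)$ and $A\subset B-\mathrm{int}(C)$. For $e\in-\mathrm{int}(C)$: $\phi_{e,A}(y)=\inf\{t\in\mathbb R: y\in te+A+C\}$; $G^\ell_e(A,B)=\sup_{b\in B}\phi_{e,A}(b)$; $G^u_e(B,A):=-G^\ell_e(-B,-A)$; $w_e(A,B)=\big(-G^\ell_e(A,B),\,G^u_e(B,A)\big)$. *)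

theory Defs
  imports "HOL-Analysis.Analysis"
begin

text \<open>Real topological linear space: real vector space with a topology making
  addition and negation continuous; joint continuity of scalar multiplication is
  imposed as a hypothesis of the theorem (see scaleR_cont).\<close>
class topological_real_vector = real_vector + topological_ab_group_add

definition scaleR_cont :: "'a::topological_real_vector itself \<Rightarrow> bool" where
  "scaleR_cont _ \<longleftrightarrow> continuous_on UNIV (\<lambda>p :: real \<times> 'a. fst p *\<^sub>R snd p)"

definition msum :: "'a::ab_group_add set \<Rightarrow> 'a set \<Rightarrow> 'a set" where
  "msum A B = {a + b | a b. a \<in> A \<and> b \<in> B}"

definition sneg :: "'a::ab_group_add set \<Rightarrow> 'a set" where
  "sneg A = uminus ` A"

definition pointed :: "'a::real_vector set \<Rightarrow> bool" where
  "pointed C \<longleftrightarrow> C \<inter> sneg C = {0}"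

definition proper_cone :: "'a::topological_real_vector set \<Rightarrow> bool" where
  "proper_cone C \<longleftrightarrow> cone C \<and> convex C \<and> closed C \<and> pointed C \<and> interior C \<noteq> {}"

definition P0 :: "'a::ab_group_add set \<Rightarrow> 'a set \<Rightarrow> bool" where
  "P0 C A \<longleftrightarrow> A \<noteq> {} \<and> msum A C \<noteq> UNIV \<and> msum A (sneg C) \<noteq> UNIV"

definition C_compact :: "'a::{ab_group_add,topological_space} set \<Rightarrow> 'a set \<Rightarrow> bool" where
  "C_compact C A \<longleftrightarrow>
     (\<forall>\<U>. (\<forall>U\<in>\<U>. open U) \<and> A \<subseteq> \<Union>((\<lambda>U. msum U C) ` \<U>) \<longrightarrow>
        (\<exists>\<F>\<subseteq>\<U>. finite \<F> \<and> A \<subseteq> \<Union>((\<lambda>U. msum U C) ` \<F>)))"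

definition mp_C_compact :: "'a::{ab_group_add,topological_space} set \<Rightarrow> 'a set \<Rightarrow> bool" where
  "mp_C_compact C A \<longleftrightarrow> C_compact C A \<and> C_compact (sneg C) A"

definition set_less_s :: "'a::{ab_group_add,topological_space} set \<Rightarrow> 'a set \<Rightarrow> 'a set \<Rightarrow> bool" where
  "set_less_s C A B \<longleftrightarrow> B \<subseteq> msum A (interior C) \<and> A \<subseteq> msum B (sneg (interior C))"

text \<open>Gerstewitz-type functional, valued in extended reals (inf of empty set = +\<infinity>).\<close>
definition phi :: "'a::real_vector set \<Rightarrow> 'a \<Rightarrow> 'a set \<Rightarrow> 'a \<Rightarrow> ereal" where
  "phi C e A y = Inf {ereal t | t. y \<in> msum {t *\<^sub>R e} (msum A C)}"

definition G_l :: "'a::real_vector set \<Rightarrow> 'a \<Rightarrow> 'a set \<Rightarrow> 'a set \<Rightarrow> ereal" where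
  "G_l C e A B = (SUP b\<in>B. phi C e A b)"

definition G_u :: "'a::real_vector set \<Rightarrow> 'a \<Rightarrow> 'a set \<Rightarrow> 'a set \<Rightarrow> ereal" where
  "G_u C e B A = - G_l C e (sneg B) (sneg A)"

definition w :: "'a::real_vector set \<Rightarrow> 'a \<Rightarrow> 'a set \<Rightarrow> 'a set \<Rightarrow> ereal \<times> ereal" where
  "w C e A B = (- G_l C e A B, G_u C e B A)"

text \<open>a <_{R^2_+} b iff b - a \<in> int(R^2_+), i.e. strict componentwise order.\<close>
definition lt_R2plus :: "ereal \<times> ereal \<Rightarrow> ereal \<times> ereal \<Rightarrow> bool" where
  "lt_R2plus a b \<longleftrightarrow> fst a < fst b \<and> snd a < snd b"

end

theory Submission
  imports Defs
begin

lemma msum_mem: "y \<in> msum A B \<longleftrightarrow> (\<exists>a\<in>A. \<exists>b\<in>B. y = a + b)"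
  unfolding msum_def by blast

lemma sneg_mem: "y \<in> sneg A \<longleftrightarrow> - y \<in> A"
  unfolding sneg_def by (auto simp: image_iff intro: bexI[where x="-y"])

lemma open_transl:
  fixes S :: "'a::topological_ab_group_add set"
  assumes "open S" shows "open ((\<lambda>x. c + x) ` S)"
proof -
  have "(\<lambda>x. c + x) ` S = (\<lambda>x. x - c) -` S"
    by (auto simp: image_iff intro!: bexI[where x="_ - c"])
  moreover have "continuous_on UNIV (\<lambda>x::'a. x - c)"
    by (intro continuous_intros)
  ultimately show ?thesis using assms open_vimage by metis
qed

lemma open_neg:
  fixes S :: "'a::topological_ab_group_add set"
  assumes "open S" shows "open (sneg S)"
proof -
  have "sneg S = uminus -` S" by (auto simp: sneg_mem)
  moreover have "continuous_on UNIV (\<lambda>x::'a. - x)"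
    by (intro continuous_intros)
  ultimately show ?thesis using assms open_vimage by metis
qed

lemma scale_cont1:
  assumes "scaleR_cont TYPE('a::topological_real_vector)"
  shows "continuous_on UNIV (\<lambda>x::'a. s *\<^sub>R x)"
proof -
  have c: "continuous_on UNIV (\<lambda>p :: real \<times> 'a. fst p *\<^sub>R snd p)"
    using assms unfolding scaleR_cont_def .
  have "continuous_on UNIV (\<lambda>x::'a. (s, x))" by (intro continuous_intros)
  from continuous_on_compose2[OF c this] show ?thesis by simp
qed

lemma scale_cont2:
  assumes "scaleR_cont TYPE('a::topological_real_vector)"
  shows "continuous_on UNIV (\<lambda>s::real. (x::'a) + s *\<^sub>R y)"
proof -
  have c: "continuous_on UNIV (\<lambda>p :: real \<times> 'a. fst p *\<^sub>R snd p)"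
    using assms unfolding scaleR_cont_def .
  have "continuous_on UNIV (\<lambda>s::real. (s, y))" by (intro continuous_intros)
  from continuous_on_compose2[OF c this] have "continuous_on UNIV (\<lambda>s::real. s *\<^sub>R y)" by simp
  then show ?thesis by (intro continuous_intros)
qed

lemma int_scale:
  fixes C :: "'a::topological_real_vector set"
  assumes sc: "scaleR_cont TYPE('a)" and "cone C" and "s > 0" and x: "x \<in> interior C"
  shows "s *\<^sub>R x \<in> interior C"
proof -
  have eq: "(\<lambda>y. s *\<^sub>R y) ` interior C = (\<lambda>y. (1/s) *\<^sub>R y) -` interior C"
    using \<open>s > 0\<close> by (auto simp: image_iff intro!: bexI[where x="(1/s) *\<^sub>R _"])
  have "open ((\<lambda>y. s *\<^sub>R y) ` interior C)"
    unfolding eq using open_vimage[OF open_interior scale_cont1[OF sc]] by blast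
  moreover have "(\<lambda>y. s *\<^sub>R y) ` interior C \<subseteq> C"
    using \<open>cone C\<close> \<open>s > 0\<close> interior_subset unfolding cone_def by fastforce
  ultimately show ?thesis using x by (meson image_eqI interior_maximal subsetD)
qed

lemma cone_add:
  fixes C :: "'a::real_vector set"
  assumes "cone C" "convex C" "x \<in> C" "y \<in> C"
  shows "x + y \<in> C"
proof -
  have "(1/2::real) *\<^sub>R x + (1/2::real) *\<^sub>R y \<in> C"
    using assms(2-4) unfolding convex_def by simp
  then have "(2::real) *\<^sub>R ((1/2::real) *\<^sub>R x + (1/2::real) *\<^sub>R y) \<in> C"
    using assms(1) unfolding cone_def by simp
  then show ?thesis by (simp add: scaleR_add_right)
qed

lemma int_add:
  fixes C :: "'a::topological_real_vector set"
  assumes "cone C" "convex C" and x: "x \<in> interior C" and c: "c \<in> C"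
  shows "x + c \<in> interior C"
proof -
  have "open ((\<lambda>y. c + y) ` interior C)" by (rule open_transl) simp
  moreover have "(\<lambda>y. c + y) ` interior C \<subseteq> C"
    using cone_add[OF assms(1,2)] c interior_subset by (fastforce simp: add.commute)
  ultimately show ?thesis using x by (metis (no_types, lifting) add.commute image_eqI interior_maximal subsetD)
qed


lemma phi_mem: "y \<in> msum {t *\<^sub>R e} (msum A C) \<longleftrightarrow> (\<exists>a\<in>A. \<exists>c\<in>C. y = t *\<^sub>R e + (a + c))"
  unfolding msum_def by blast

lemma key:
  fixes C :: "'a::topological_real_vector set"
  assumes sc: "scaleR_cont TYPE('a)" and cc: "cone C" "convex C"
    and e: "e \<in> sneg (interior C)" and comp: "C_compact C Y"
  shows "G_l C e X Y < 0 \<longleftrightarrow> Y \<subseteq> msum X (interior C)"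
proof
  have me: "- e \<in> interior C" using e by (simp add: sneg_mem)
  assume G: "G_l C e X Y < 0"
  show "Y \<subseteq> msum X (interior C)"
  proof
    fix y assume y: "y \<in> Y"
    have "phi C e X y \<le> G_l C e X Y" unfolding G_l_def using y by (rule SUP_upper)
    with G have "phi C e X y < 0" by simp
    then obtain t where t: "y \<in> msum {t *\<^sub>R e} (msum X C)" "ereal t < 0"
      unfolding phi_def by (auto simp: Inf_less_iff)
    then obtain a c where ac: "a \<in> X" "c \<in> C" "y = t *\<^sub>R e + (a + c)" by (auto simp: phi_mem)
    have "0 < -t" using t(2) by simp
    have "(-t) *\<^sub>R (-e) \<in> interior C" by (rule int_scale[OF sc cc(1) \<open>0 < -t\<close> me])
    then have "t *\<^sub>R e \<in> interior C" by simp
    then have "t *\<^sub>R e + c \<in> interior C" using int_add[OF cc _ ac(2)] by simp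
    moreover have "y = a + (t *\<^sub>R e + c)" using ac(3) by (simp add: algebra_simps)
    ultimately show "y \<in> msum X (interior C)" using ac(1) by (auto simp: msum_mem)
  qed
next
  have me: "- e \<in> interior C" using e by (simp add: sneg_mem)
  have C0: "0 \<in> C"
  proof -
    obtain z where "z \<in> C" using me interior_subset by blast
    then show ?thesis using cc(1) unfolding cone_def by (metis order_refl scale_zero_left)
  qed
  assume sub: "Y \<subseteq> msum X (interior C)"
  define U where "U n = msum {(-(1/real(Suc n))) *\<^sub>R e} (msum X (interior C))" for n
  have openU: "open (U n)" for n
  proof -
    have "U n = (\<Union>a\<in>X. (\<lambda>x. ((-(1/real(Suc n))) *\<^sub>R e + a) + x) ` interior C)"
      unfolding U_def msum_def by (auto simp: image_iff; force simp: algebra_simps)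
    then show ?thesis by (auto intro!: open_UN open_transl)
  qed
  have cover: "Y \<subseteq> \<Union>((\<lambda>V. msum V C) ` range U)"
  proof
    fix y assume y: "y \<in> Y"
    then obtain a x where ax: "a \<in> X" "x \<in> interior C" "y = a + x" using subsetD[OF sub y] unfolding msum_mem by blast
    have "open ((\<lambda>s::real. x + s *\<^sub>R e) -` interior C)"
      using open_vimage[OF open_interior scale_cont2[OF sc]] by blast
    moreover have "0 \<in> (\<lambda>s::real. x + s *\<^sub>R e) -` interior C" using ax by simp
    ultimately obtain d where d: "d > 0" "ball 0 d \<subseteq> (\<lambda>s::real. x + s *\<^sub>R e) -` interior C"
      using open_contains_ball by blast
    obtain n where n: "inverse (real (Suc n)) < d" using reals_Archimedean d(1) by blast
    have "1/real (Suc n) \<in> ball 0 d" using n by (simp add: dist_real_def divide_inverse)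
    then have z: "x + (1/real (Suc n)) *\<^sub>R e \<in> interior C" using d(2) by blast
    have "y = (-(1/real(Suc n))) *\<^sub>R e + (a + (x + (1/real (Suc n)) *\<^sub>R e))"
      using ax(3) by (simp add: algebra_simps)
    moreover have "a + (x + (1/real (Suc n)) *\<^sub>R e) \<in> msum X (interior C)"
      using ax(1) z unfolding msum_mem by blast
    ultimately have "y \<in> U n" unfolding U_def msum_def[of "{_}"] by blast
    then have "y \<in> msum (U n) C" using C0 unfolding msum_mem by (metis add.right_neutral)
    then show "y \<in> \<Union>((\<lambda>V. msum V C) ` range U)" by blast
  qed
  obtain F where F: "F \<subseteq> range U" "finite F" "Y \<subseteq> \<Union>((\<lambda>V. msum V C) ` F)"
    using comp cover openU unfolding C_compact_def by (metis rangeE)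
  obtain I where I: "F = U ` I" "finite I"
    using finite_subset_image[OF F(2,1)] by blast
  define M where "M = Max I"
  have bound: "phi C e X y \<le> ereal (-(1/real(Suc M)))" if y: "y \<in> Y" for y
  proof -
    obtain n where n: "n \<in> I" "y \<in> msum (U n) C" using F(3) I(1) y by blast
    then obtain u c where uc: "u \<in> U n" "c \<in> C" "y = u + c" by (auto simp: msum_mem)
    then obtain a x where ax: "a \<in> X" "x \<in> interior C" "u = (-(1/real(Suc n))) *\<^sub>R e + (a + x)"
      unfolding U_def by (auto simp: msum_mem)
    have "x + c \<in> C" using int_add[OF cc ax(2) uc(2)] interior_subset by blast
    moreover have "y = (-(1/real(Suc n))) *\<^sub>R e + (a + (x + c))" using uc(3) ax(3) by (simp add: algebra_simps)
    ultimately have "y \<in> msum {(-(1/real(Suc n))) *\<^sub>R e} (msum X C)" using ax(1) unfolding phi_mem by blast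
    then have "phi C e X y \<le> ereal (-(1/real(Suc n)))" unfolding phi_def by (auto intro!: Inf_lower)
    moreover have "n \<le> M" unfolding M_def using n(1) I(2) by simp
    then have "-(1/real(Suc n)) \<le> -(1/real(Suc M))" by (simp add: frac_le)
    ultimately show ?thesis by (meson ereal_less_eq(3) order_trans)
  qed
  have "G_l C e X Y \<le> ereal (-(1/real(Suc M)))" unfolding G_l_def by (rule SUP_least) (rule bound)
  also have "\<dots> < 0" by simp
  finally show "G_l C e X Y < 0" .
qed


lemma negeq: "- (a::'a::ab_group_add) = u + x \<Longrightarrow> a = -u + -x"
proof -
  assume h: "- a = u + x"
  have "a = - (u + x)" using h by (metis minus_minus)
  then show ?thesis by (simp add: minus_add_distrib)
qed

lemma compact_transfer:
  fixes C :: "'a::topological_ab_group_add set"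
  assumes "C_compact (sneg C) A"
  shows "C_compact C (sneg A)"
  unfolding C_compact_def
proof (intro allI impI, elim conjE)
  fix \<U> :: "'a set set"
  assume op: "\<forall>U\<in>\<U>. open U" and cov: "sneg A \<subseteq> \<Union>((\<lambda>U. msum U C) ` \<U>)"
  have op': "\<forall>U\<in>sneg ` \<U>. open U" using op open_neg by blast
  have cov': "A \<subseteq> \<Union>((\<lambda>U. msum U (sneg C)) ` (sneg ` \<U>))"
  proof
    fix a assume "a \<in> A"
    have ma: "-a \<in> sneg A" using \<open>a \<in> A\<close> by (simp add: sneg_mem)
    obtain U u c where o: "U \<in> \<U>" "u \<in> U" "c \<in> C" "-a = u + c"
      using subsetD[OF cov ma] unfolding UN_iff msum_mem by blast
    then have "-u \<in> sneg U" "-c \<in> sneg C" "a = -u + -c"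
      using o negeq[OF o(4)] by (auto simp: sneg_mem)
    then have "a \<in> msum (sneg U) (sneg C)" unfolding msum_mem by blast
    moreover have "sneg U \<in> sneg ` \<U>" using \<open>U \<in> \<U>\<close> by (rule imageI)
    ultimately show "a \<in> \<Union>((\<lambda>U. msum U (sneg C)) ` (sneg ` \<U>))" by (rule UN_I[rotated])
  qed
  obtain F' where F': "F' \<subseteq> sneg ` \<U>" "finite F'" "A \<subseteq> \<Union>((\<lambda>U. msum U (sneg C)) ` F')"
  proof -
    have "\<forall>\<U>. (\<forall>U\<in>\<U>. open U) \<and> A \<subseteq> \<Union>((\<lambda>U. msum U (sneg C)) ` \<U>) \<longrightarrow>
        (\<exists>\<F>\<subseteq>\<U>. finite \<F> \<and> A \<subseteq> \<Union>((\<lambda>U. msum U (sneg C)) ` \<F>))"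
      using assms unfolding C_compact_def .
    then have "\<exists>\<F>\<subseteq>sneg ` \<U>. finite \<F> \<and> A \<subseteq> \<Union>((\<lambda>U. msum U (sneg C)) ` \<F>)"
      using op' cov' by blast
    then show ?thesis using that by blast
  qed
  obtain F where F: "F \<subseteq> \<U>" "finite F" "F' = sneg ` F"
    using finite_subset_image[OF F'(2,1)] by blast
  have "sneg A \<subseteq> \<Union>((\<lambda>U. msum U C) ` F)"
  proof
    fix y assume "y \<in> sneg A"
    have ma: "-y \<in> A" using \<open>y \<in> sneg A\<close> by (simp add: sneg_mem)
    obtain U u c where o: "U \<in> F" "u \<in> sneg U" "c \<in> sneg C" "-y = u + c"
      using subsetD[OF F'(3) ma] F(3) unfolding UN_iff msum_mem by blast
    then have "-u \<in> U" "-c \<in> C" "y = -u + -c"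
      using o negeq[OF o(4)] by (auto simp: sneg_mem)
    then have "y \<in> msum U C" unfolding msum_mem by blast
    then show "y \<in> \<Union>((\<lambda>U. msum U C) ` F)" using \<open>U \<in> F\<close> by (rule UN_I[rotated])
  qed
  then show "\<exists>\<F>\<subseteq>\<U>. finite \<F> \<and> sneg A \<subseteq> \<Union>((\<lambda>U. msum U C) ` \<F>)" using F by blast
qed

lemma neg_sub:
  fixes A B S :: "'a::ab_group_add set"
  shows "sneg A \<subseteq> msum (sneg B) S \<longleftrightarrow> A \<subseteq> msum B (sneg S)"
proof
  assume h: "sneg A \<subseteq> msum (sneg B) S"
  show "A \<subseteq> msum B (sneg S)"
  proof
    fix a assume "a \<in> A"
    have ma: "-a \<in> sneg A" using \<open>a \<in> A\<close> by (simp add: sneg_mem)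
    obtain u x where o: "u \<in> sneg B" "x \<in> S" "-a = u + x" using subsetD[OF h ma] unfolding msum_mem by blast
    have "-u \<in> B" "-x \<in> sneg S" "a = -u + -x" using o negeq[OF o(3)] by (auto simp: sneg_mem)
    then show "a \<in> msum B (sneg S)" unfolding msum_mem by blast
  qed
next
  assume h: "A \<subseteq> msum B (sneg S)"
  show "sneg A \<subseteq> msum (sneg B) S"
  proof
    fix y assume "y \<in> sneg A"
    have ma: "-y \<in> A" using \<open>y \<in> sneg A\<close> by (simp add: sneg_mem)
    obtain u x where o: "u \<in> B" "x \<in> sneg S" "-y = u + x" using subsetD[OF h ma] unfolding msum_mem by blast
    have "-u \<in> sneg B" "-x \<in> S" "y = -u + -x" using o negeq[OF o(3)] by (auto simp: sneg_mem)
    then show "y \<in> msum (sneg B) S" unfolding msum_mem by blast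
  qed
qed

theorem theorem4:
  fixes C :: "'a::topological_real_vector set" and e :: 'a and A B :: "'a set"
  assumes "scaleR_cont TYPE('a)"
    and "proper_cone C"
    and "e \<in> sneg (interior C)"
    and "P0 C A" and "P0 C B"
    and "mp_C_compact C A" and "mp_C_compact C B"
  shows "lt_R2plus (0, 0) (w C e A B) \<longleftrightarrow> set_less_s C A B"
proof -
  have cc: "cone C" "convex C" using assms(2) unfolding proper_cone_def by auto
  have k1: "G_l C e A B < 0 \<longleftrightarrow> B \<subseteq> msum A (interior C)"
    using key[OF assms(1) cc assms(3), of B A] assms(7) unfolding mp_C_compact_def by simp
  have cA: "C_compact C (sneg A)" using compact_transfer assms(6) unfolding mp_C_compact_def by blast
  have k2: "G_l C e (sneg B) (sneg A) < 0 \<longleftrightarrow> A \<subseteq> msum B (sneg (interior C))"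
    using key[OF assms(1) cc assms(3) cA, of "sneg B"] neg_sub[of A B "interior C"] by simp
  have "lt_R2plus (0, 0) (w C e A B) \<longleftrightarrow> G_l C e A B < 0 \<and> G_l C e (sneg B) (sneg A) < 0"
    unfolding lt_R2plus_def w_def G_u_def by (simp add: ereal_uminus_less_reorder)
  then show ?thesis using k1 k2 unfolding set_less_s_def by blast
qed

end
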